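(* Let $\mathbb N$ be a strongly connected symmetric directed graph on $m$ vertices without self-arcs, with arc matrices $C_{ij}$ (each with $n$ columns, orthonormal rows) such that $\bar{\mathbb N}$ is well-configured. Let $\mathbb N(0),\mathbb N(1),\dots$ be a sequence of symmetric spanning subgraphs of $\mathbb N$ such that every arc of $\mathbb N$ belongs to $\mathbb N(t)$ for infinitely many $t$. Let $\mathcal N_i(t)$ be the neighbor set of $i$ in $\mathbb N(t)$, $d_i(t)=|\mathcal N_i(t)|$, and $w_{ij}(t)=1/(1+\max\{d_i(t),d_j(t)\})$ for $j\in\mathcal N_i(t)$. For arbitrary $x_i(0)\in\mathbb R^n$, define $$x_i(t+1)=x_i(t)-\frac12\sum_{j\in\mathcal N_i(t)}w_{ij}(t)\big(C_{ij}'C_{ij}+C_{ji}'C_{ji}\big)\big(x_i(t)-x_j(t)\big).$$ Then there exists $x^*\in\mathbb R^n$ with $x_i(t)\to x^*$ as $t\to\infty$ for all $i$.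
   Context: A directed graph is symmetric if whenever $(i,j)$ is an arc so is $(j,i)$. A spanning subgraph of $\mathbb N$ has the same vertex set and a subset of the arcs. Each arc $(j,i)$ of $\mathbb N$ carries a real matrix $C_{ji}$ with $n$ columns; $'$ denotes transpose. $\bar{\mathbb N}$ is well-configured if for all $x_1,\dots,x_m\in\mathbb R^n$, $C_{ji}x_i=C_{ji}x_j$ for every arc $(j,i)$ of $\mathbb N$ implies $x_1=\cdots=x_m$. *)

theory Defs
  imports "HOL-Analysis.Analysis"
begin

text \<open>A real matrix with n columns and an arbitrary (finite) number of rows is
represented by the list of its rows, each row a vector in real^'n.\<close>

definition mat_apply :: "(real^'n) list \<Rightarrow> real^'n \<Rightarrow> real list" where
  "mat_apply C x = map (\<lambda>r. r \<bullet> x) C"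

text \<open>C' C x, i.e. the transpose of C times C times x.\<close>
definition gram_apply :: "(real^'n) list \<Rightarrow> real^'n \<Rightarrow> real^'n" where
  "gram_apply C x = (\<Sum>k<length C. (C ! k \<bullet> x) *\<^sub>R C ! k)"

definition orthonormal_rows :: "(real^'n) list \<Rightarrow> bool" where
  "orthonormal_rows C \<longleftrightarrow>
     (\<forall>k<length C. \<forall>l<length C. C ! k \<bullet> C ! l = (if k = l then 1 else 0))"

definition well_configured :: "('v \<times> 'v) set \<Rightarrow> ('v \<Rightarrow> 'v \<Rightarrow> (real^'n) list) \<Rightarrow> bool" where
  "well_configured E C \<longleftrightarrow>
     (\<forall>x :: 'v \<Rightarrow> real^'n.
        (\<forall>j i. (j, i) \<in> E \<longrightarrow> mat_apply (C j i) (x i) = mat_apply (C j i) (x j))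
        \<longrightarrow> (\<forall>i j. x i = x j))"

definition strongly_connected :: "('v \<times> 'v) set \<Rightarrow> bool" where
  "strongly_connected E \<longleftrightarrow> (\<forall>i j. (i, j) \<in> E\<^sup>*)"

definition nbrs :: "('v \<times> 'v) set \<Rightarrow> 'v \<Rightarrow> 'v set" where
  "nbrs F i = {j. (j, i) \<in> F}"

definition weight :: "('v \<times> 'v) set \<Rightarrow> 'v \<Rightarrow> 'v \<Rightarrow> real" where
  "weight F i j = 1 / (1 + real (max (card (nbrs F i)) (card (nbrs F j))))"

end

theory Submission
  imports Defs
begin


lemma gram_diff: "gram_apply C (a - b) = gram_apply C a - gram_apply C b"
  unfolding gram_apply_def by (simp add: inner_diff_right scaleR_left_diff_distrib sum_subtractf)

lemma gram_minus: "gram_apply C (- a) = - gram_apply C a"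
  unfolding gram_apply_def by (simp add: sum_negf)

lemma inner_gram: "z \<bullet> gram_apply C z = (\<Sum>k<length C. (C!k \<bullet> z)^2)"
  unfolding gram_apply_def by (simp add: inner_sum_right power2_eq_square inner_commute)

lemma gram_gram:
  assumes "orthonormal_rows C"
  shows "gram_apply C z \<bullet> gram_apply C z = (\<Sum>k<length C. (C!k \<bullet> z)^2)"
proof -
  have "gram_apply C z \<bullet> gram_apply C z =
     (\<Sum>k<length C. \<Sum>l<length C. (C!k \<bullet> z) * (C!l \<bullet> z) * (C!k \<bullet> C!l))"
    unfolding gram_apply_def by (simp add: inner_sum_left inner_sum_right mult.assoc sum_distrib_left, simp add: inner_commute)
  also have "\<dots> = (\<Sum>k<length C. \<Sum>l<length C. if k = l then (C!k \<bullet> z) * (C!l \<bullet> z) else 0)"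
    using assms unfolding orthonormal_rows_def by (intro sum.cong refl) auto
  also have "\<dots> = (\<Sum>k<length C. (C!k \<bullet> z)^2)"
    by (simp add: power2_eq_square)
  finally show ?thesis .
qed

lemma inner_gram_nonneg: "0 \<le> z \<bullet> gram_apply C z"
  by (simp add: inner_gram sum_nonneg)

lemma inner_gram_zero:
  assumes "z \<bullet> gram_apply C z = 0" "k < length C"
  shows "C!k \<bullet> z = 0"
  using assms by (simp add: inner_gram sum_nonneg_eq_0_iff)

lemma CS_weighted:
  fixes W a :: "'a \<Rightarrow> real"
  assumes "\<And>j. j \<in> A \<Longrightarrow> 0 \<le> W j"
  shows "(\<Sum>j\<in>A. W j * a j)^2 \<le> (\<Sum>j\<in>A. W j) * (\<Sum>j\<in>A. W j * (a j)^2)"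
proof -
  have "(\<Sum>j\<in>A. W j * a j) = (\<Sum>j\<in>A. sqrt (W j) * (sqrt (W j) * a j))"
    using assms by (intro sum.cong refl) (simp flip: mult.assoc)
  moreover have "(\<Sum>j\<in>A. W j) = (\<Sum>j\<in>A. (sqrt (W j))^2)"
    using assms by (intro sum.cong refl) simp
  moreover have "(\<Sum>j\<in>A. W j * (a j)^2) = (\<Sum>j\<in>A. (sqrt (W j) * a j)^2)"
    using assms by (intro sum.cong refl) (simp add: power_mult_distrib)
  ultimately show ?thesis using Cauchy_Schwarz_ineq_sum[of "\<lambda>j. sqrt (W j)" "\<lambda>j. sqrt (W j) * a j" A]
    by simp
qed


definition Pm :: "('v \<Rightarrow> 'v \<Rightarrow> (real^'n) list) \<Rightarrow> 'v \<Rightarrow> 'v \<Rightarrow> real^'n \<Rightarrow> real^'n" where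
  "Pm C i j z = gram_apply (C i j) z + gram_apply (C j i) z"

definition gv :: "('v \<Rightarrow> 'v \<Rightarrow> (real^'n) list) \<Rightarrow> ('v \<times> 'v) set \<Rightarrow> ('v \<Rightarrow> real^'n) \<Rightarrow> 'v \<Rightarrow> real^'n" where
  "gv C G u i = (\<Sum>j\<in>nbrs G i. weight G i j *\<^sub>R Pm C i j (u i - u j))"

definition stp :: "('v \<Rightarrow> 'v \<Rightarrow> (real^'n) list) \<Rightarrow> ('v \<times> 'v) set \<Rightarrow> ('v \<Rightarrow> real^'n) \<Rightarrow> 'v \<Rightarrow> real^'n" where
  "stp C G u = (\<lambda>i. u i - (1/2) *\<^sub>R gv C G u i)"

definition nn :: "('v::finite \<Rightarrow> real^'n) \<Rightarrow> real" where
  "nn u = (\<Sum>i\<in>UNIV. u i \<bullet> u i)"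

definition qq :: "('v \<Rightarrow> 'v \<Rightarrow> (real^'n) list) \<Rightarrow> ('v \<Rightarrow> real^'n) \<Rightarrow> 'v \<Rightarrow> 'v \<Rightarrow> real" where
  "qq C u i j = (u i - u j) \<bullet> Pm C i j (u i - u j)"

lemma Pm_diff: "Pm C i j (a - b) = Pm C i j a - Pm C i j b"
  by (simp add: Pm_def gram_diff)

lemma Pm_minus: "Pm C i j (- a) = - Pm C i j a"
  by (simp add: Pm_def gram_minus)

lemma Pm_sym: "Pm C i j = Pm C j i"
  by (rule ext) (simp add: Pm_def)

lemma weight_sym: "weight G i j = weight G j i"
  by (simp add: weight_def max.commute)

lemma weight_pos: "0 < weight G i j"
  by (simp add: weight_def)

lemma qq_nonneg: "0 \<le> qq C u i j"
  by (simp add: qq_def Pm_def inner_add_right inner_gram_nonneg add_nonneg_nonneg)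

lemma swap_nbrs:
  fixes G :: "('v::finite \<times> 'v) set"
  assumes "sym G"
  shows "(\<Sum>i\<in>UNIV. \<Sum>j\<in>nbrs G i. f i j) = (\<Sum>i\<in>UNIV. \<Sum>j\<in>nbrs G i. (f j i :: real))"
proof -
  have "(\<Sum>i\<in>UNIV. \<Sum>j\<in>nbrs G i. f i j) = (\<Sum>i\<in>UNIV. \<Sum>j\<in>{j\<in>UNIV. (j,i)\<in>G}. f i j)"
    by (simp add: nbrs_def)
  also have "\<dots> = (\<Sum>j\<in>UNIV. \<Sum>i\<in>{i\<in>UNIV. (j,i)\<in>G}. f i j)"
    by (rule sum.swap_restrict) auto
  also have "\<dots> = (\<Sum>j\<in>UNIV. \<Sum>i\<in>nbrs G j. f i j)"
    using assms by (intro sum.cong refl) (auto simp: nbrs_def dest: symD)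
  finally show ?thesis .
qed

lemma gv_diff: "gv C G (u - v) i = gv C G u i - gv C G v i"
proof -
  have "\<And>j. (u - v) i - (u - v) j = (u i - u j) - (v i - v j)" by simp
  then show ?thesis unfolding gv_def
    by (simp only: Pm_diff scaleR_diff_right sum_subtractf)
qed

lemma stp_diff: "stp C G (u - v) = stp C G u - stp C G v"
  by (rule ext) (simp add: stp_def gv_diff algebra_simps)

lemma nn_vec: "(norm (vec_lambda u :: (real^'n)^'v::finite))^2 = nn u"
  by (simp add: power2_norm_eq_inner inner_vec_def nn_def)


locale setting =
  fixes E :: "('v::finite \<times> 'v) set" and C :: "'v \<Rightarrow> 'v \<Rightarrow> (real^'n) list"
  assumes symE: "sym E"
    and orthE: "\<forall>i j. (i, j) \<in> E \<longrightarrow> orthonormal_rows (C i j)"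
begin

lemma sum_ug:
  assumes symG: "sym G"
  shows "(\<Sum>i\<in>UNIV. u i \<bullet> gv C G u i) = (\<Sum>i\<in>UNIV. \<Sum>j\<in>nbrs G i. weight G i j * qq C u i j) / 2"
proof -
  define S where "S = (\<Sum>i\<in>UNIV. u i \<bullet> gv C G u i)"
  have S1: "S = (\<Sum>i\<in>UNIV. \<Sum>j\<in>nbrs G i. weight G i j * (u i \<bullet> Pm C i j (u i - u j)))"
    unfolding S_def gv_def by (simp add: inner_sum_right)
  also have "\<dots> = (\<Sum>i\<in>UNIV. \<Sum>j\<in>nbrs G i. weight G j i * (u j \<bullet> Pm C j i (u j - u i)))"
    by (rule swap_nbrs[OF symG])
  also have "\<dots> = (\<Sum>i\<in>UNIV. \<Sum>j\<in>nbrs G i. - (weight G i j * (u j \<bullet> Pm C i j (u i - u j))))"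
  proof (intro sum.cong refl)
    fix i j
    have "u j - u i = - (u i - u j)" by simp
    then show "weight G j i * (u j \<bullet> Pm C j i (u j - u i)) = - (weight G i j * (u j \<bullet> Pm C i j (u i - u j)))"
      by (simp only: weight_sym[of G j i] Pm_sym[of C j i] Pm_minus inner_minus_right)
  qed
  finally have S2: "S = (\<Sum>i\<in>UNIV. \<Sum>j\<in>nbrs G i. - (weight G i j * (u j \<bullet> Pm C i j (u i - u j))))" .
  have "S + S = (\<Sum>i\<in>UNIV. \<Sum>j\<in>nbrs G i. weight G i j * (u i \<bullet> Pm C i j (u i - u j)))
      + (\<Sum>i\<in>UNIV. \<Sum>j\<in>nbrs G i. - (weight G i j * (u j \<bullet> Pm C i j (u i - u j))))"
    using S1 S2 by (rule arg_cong2)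
  then have "2 * S = (\<Sum>i\<in>UNIV. \<Sum>j\<in>nbrs G i. weight G i j * (u i \<bullet> Pm C i j (u i - u j))
                  + - (weight G i j * (u j \<bullet> Pm C i j (u i - u j))))"
    by (simp only: mult_2 sum.distrib)
  also have "\<dots> = (\<Sum>i\<in>UNIV. \<Sum>j\<in>nbrs G i. weight G i j * qq C u i j)"
    by (intro sum.cong refl) (simp add: qq_def inner_diff_left algebra_simps)
  finally show ?thesis unfolding S_def by simp
qed

lemma Pm_sq:
  assumes sub: "G \<subseteq> E" and j: "j \<in> nbrs G i"
  shows "Pm C i j z \<bullet> Pm C i j z \<le> 2 * (z \<bullet> Pm C i j z)"
proof -
  have ji: "(j, i) \<in> E" using sub j by (auto simp: nbrs_def)
  then have ij: "(i, j) \<in> E" using symE by (auto dest: symD)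
  define a where "a = gram_apply (C i j) z"
  define b where "b = gram_apply (C j i) z"
  have aa: "a \<bullet> a = z \<bullet> a"
    unfolding a_def using orthE ij by (simp add: gram_gram inner_gram)
  have bb: "b \<bullet> b = z \<bullet> b"
    unfolding b_def using orthE ji by (simp add: gram_gram inner_gram)
  have "0 \<le> (a - b) \<bullet> (a - b)" by simp
  then have "(a + b) \<bullet> (a + b) \<le> 2 * (a \<bullet> a + b \<bullet> b)"
    by (simp add: inner_add_left inner_add_right inner_diff_left inner_diff_right inner_commute)
  then show ?thesis
    by (simp add: Pm_def a_def[symmetric] b_def[symmetric] aa bb inner_add_right)
qed

definition sig :: real where "sig = real CARD('v) / (1 + real CARD('v))"

lemma sumW:
  fixes G :: "('v \<times> 'v) set"
  shows "(\<Sum>j\<in>nbrs G i. weight G i j) \<le> sig"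
proof -
  define d where "d = card (nbrs G i)"
  have "(\<Sum>j\<in>nbrs G i. weight G i j) \<le> (\<Sum>j\<in>nbrs G i. 1 / (1 + real d))"
    unfolding weight_def d_def by (intro sum_mono) (simp add: frac_le)
  also have "\<dots> = real d / (1 + real d)" by (simp add: d_def)
  also have "\<dots> \<le> sig"
  proof -
    have "d \<le> CARD('v)" unfolding d_def using card_mono[of "UNIV::'v set" "nbrs G i"] by simp
    then have "real d * (1 + real CARD('v)) \<le> real CARD('v) * (1 + real d)"
      by (simp add: algebra_simps)
    then show ?thesis unfolding sig_def
      by (simp add: pos_divide_le_eq pos_le_divide_eq add_pos_nonneg)
  qed
  finally show ?thesis .
qed

lemma gv_bound:
  fixes G :: "('v \<times> 'v) set"
  assumes sub: "G \<subseteq> E"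
  shows "gv C G u i \<bullet> gv C G u i \<le> 2 * sig * (\<Sum>j\<in>nbrs G i. weight G i j * qq C u i j)"
proof -
  define W where "W = (\<lambda>j. weight G i j)"
  define a where "a = (\<lambda>j. norm (Pm C i j (u i - u j)))"
  have W0: "\<And>j. 0 \<le> W j" unfolding W_def by (rule less_imp_le[OF weight_pos])
  have "norm (gv C G u i) \<le> (\<Sum>j\<in>nbrs G i. norm (W j *\<^sub>R Pm C i j (u i - u j)))"
    unfolding gv_def W_def by (rule norm_sum)
  also have "\<dots> = (\<Sum>j\<in>nbrs G i. W j * a j)"
    using W0 unfolding a_def by (simp add: abs_of_nonneg)
  finally have n1: "norm (gv C G u i) \<le> (\<Sum>j\<in>nbrs G i. W j * a j)" .
  have "(norm (gv C G u i))^2 \<le> (\<Sum>j\<in>nbrs G i. W j * a j)^2"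
    using n1 by (rule power_mono) simp
  also have "\<dots> \<le> (\<Sum>j\<in>nbrs G i. W j) * (\<Sum>j\<in>nbrs G i. W j * (a j)^2)"
    by (rule CS_weighted) (use W0 in auto)
  also have "\<dots> \<le> sig * (\<Sum>j\<in>nbrs G i. W j * (2 * qq C u i j))"
  proof (rule mult_mono)
    show "(\<Sum>j\<in>nbrs G i. W j) \<le> sig" unfolding W_def by (rule sumW)
    show "(\<Sum>j\<in>nbrs G i. W j * (a j)^2) \<le> (\<Sum>j\<in>nbrs G i. W j * (2 * qq C u i j))"
    proof (rule sum_mono)
      fix j assume j: "j \<in> nbrs G i"
      have "(a j)^2 \<le> 2 * qq C u i j"
        using Pm_sq[OF sub j] unfolding a_def qq_def by (simp add: power2_norm_eq_inner)
      then show "W j * (a j)^2 \<le> W j * (2 * qq C u i j)"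
        using W0 by (simp add: mult_left_mono)
    qed
    show "0 \<le> sig" by (simp add: sig_def)
    show "0 \<le> (\<Sum>j\<in>nbrs G i. W j * (a j)^2)" using W0 by (simp add: sum_nonneg)
  qed
  also have "\<dots> = 2 * sig * (\<Sum>j\<in>nbrs G i. weight G i j * qq C u i j)"
    unfolding W_def by (simp add: sum_distrib_left mult_ac)
  finally show ?thesis
    by (simp add: power2_norm_eq_inner)
qed

end


context setting begin

lemma contract:
  fixes G :: "('v \<times> 'v) set"
  assumes sub: "G \<subseteq> E" and symG: "sym G"
  shows "nn (stp C G u) + nn (stp C G u - u) / real CARD('v) \<le> nn u"
proof -
  define g where "g = gv C G u"
  define Q where "Q = (\<Sum>i\<in>UNIV. \<Sum>j\<in>nbrs G i. weight G i j * qq C u i j)"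
  define D where "D = nn (stp C G u - u)"
  define M where "M = real CARD('v)"
  have M0: "0 < M" unfolding M_def by simp
  have h1: "\<And>i. stp C G u i \<bullet> stp C G u i = u i \<bullet> u i - u i \<bullet> g i + (1/4) * (g i \<bullet> g i)"
    unfolding stp_def g_def by (simp add: inner_diff_left inner_diff_right inner_commute)
  have h2: "\<And>i. (stp C G u - u) i \<bullet> (stp C G u - u) i = (1/4) * (g i \<bullet> g i)"
    unfolding stp_def g_def by simp
  have e1: "nn (stp C G u) = nn u - (\<Sum>i\<in>UNIV. u i \<bullet> g i) + D"
    unfolding nn_def D_def h1 h2 by (simp add: sum.distrib sum_subtractf sum_distrib_left)
  have e2: "(\<Sum>i\<in>UNIV. u i \<bullet> g i) = Q / 2"
    unfolding g_def Q_def by (rule sum_ug[OF symG])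
  have "(\<Sum>i\<in>UNIV. g i \<bullet> g i) \<le> (\<Sum>i\<in>UNIV. 2 * sig * (\<Sum>j\<in>nbrs G i. weight G i j * qq C u i j))"
    unfolding g_def by (intro sum_mono gv_bound[OF sub])
  also have "\<dots> = 2 * sig * Q" unfolding Q_def by (simp add: sum_distrib_left)
  finally have e3: "(\<Sum>i\<in>UNIV. g i \<bullet> g i) \<le> 2 * sig * Q" .
  have e4: "D = (1/4) * (\<Sum>i\<in>UNIV. g i \<bullet> g i)"
    unfolding D_def nn_def h2 by (simp add: sum_distrib_left)
  have e5: "D \<le> sig * Q / 2"
    using e3 e4 by simp
  have sM: "sig * (1 + M) = M"
    unfolding sig_def M_def by simp
  have "D * (1 + M) \<le> sig * Q / 2 * (1 + M)"
    using e5 M0 by (intro mult_right_mono) auto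
  also have "\<dots> = M * Q / 2" using sM by (simp add: algebra_simps)
  finally have "D * (1 + M) \<le> M * Q / 2" .
  then have "D + D / M \<le> Q / 2"
    using M0 by (simp add: field_simps)
  then show ?thesis using e1 e2 unfolding D_def M_def by simp
qed

lemma fixed_qq:
  fixes G :: "('v \<times> 'v) set"
  assumes symG: "sym G" and fx: "stp C G u = u" and j: "j \<in> nbrs G i"
  shows "qq C u i j = 0"
proof -
  have g0: "\<And>i. gv C G u i = 0"
  proof -
    fix i
    have "stp C G u i = u i" using fx by simp
    then show "gv C G u i = 0" unfolding stp_def by simp
  qed
  have "(\<Sum>i\<in>UNIV. \<Sum>j\<in>nbrs G i. weight G i j * qq C u i j) = 0"
    using sum_ug[OF symG, of u] g0 by simp
  then have "\<forall>i\<in>UNIV. (\<Sum>j\<in>nbrs G i. weight G i j * qq C u i j) = 0"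
    by (subst (asm) sum_nonneg_eq_0_iff) (auto intro!: sum_nonneg mult_nonneg_nonneg less_imp_le[OF weight_pos] qq_nonneg)
  then have "(\<Sum>j\<in>nbrs G i. weight G i j * qq C u i j) = 0" by simp
  then have "\<forall>j\<in>nbrs G i. weight G i j * qq C u i j = 0"
    by (subst (asm) sum_nonneg_eq_0_iff) (auto intro!: mult_nonneg_nonneg less_imp_le[OF weight_pos] qq_nonneg)
  then have "weight G i j * qq C u i j = 0" using j by blast
  then show ?thesis using weight_pos[of G i j] by simp
qed

end


definition nv :: "('v::finite \<Rightarrow> real^'n) \<Rightarrow> real" where
  "nv u = norm (vec_lambda u)"

lemma vl_diff: "vec_lambda (u - v) = vec_lambda u - vec_lambda v"
  by (simp add: vec_eq_iff)

lemma nv_sq: "(nv u)^2 = nn u"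
  unfolding nv_def by (rule nn_vec)

lemma nv_nonneg: "0 \<le> nv u" unfolding nv_def by simp

lemma nv_tri: "nv a \<le> nv b + nv (a - b)"
  unfolding nv_def vl_diff by (rule norm_triangle_sub)

lemma nv_zero: "nv u = 0 \<Longrightarrow> u i = 0"
proof -
  assume "nv u = 0"
  then have "vec_lambda u = 0" unfolding nv_def by simp
  then have "vec_lambda u $ i = 0" by simp
  then show "u i = 0" by simp
qed

context setting begin

lemma le1:
  fixes G :: "('v \<times> 'v) set"
  assumes "G \<subseteq> E" "sym G"
  shows "nv (stp C G u) \<le> nv u"
proof -
  have "0 \<le> nn (stp C G u - u) / real CARD('v)"
    by (simp add: nv_sq[symmetric])
  then have "(nv (stp C G u))^2 \<le> (nv u)^2"
    using contract[OF assms, of u] by (simp add: nv_sq)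
  then show ?thesis by (rule power2_le_imp_le[OF _ nv_nonneg])
qed

lemma lt1:
  fixes G :: "('v \<times> 'v) set"
  assumes "G \<subseteq> E" "sym G" "stp C G u \<noteq> u"
  shows "nv (stp C G u) < nv u"
proof -
  obtain i where "stp C G u i \<noteq> u i" using assms(3) by auto
  then have "(stp C G u - u) i \<noteq> 0" by simp
  then have "nv (stp C G u - u) \<noteq> 0" using nv_zero by blast
  then have "0 < (nv (stp C G u - u))^2" by simp
  then have "0 < nn (stp C G u - u) / real CARD('v)"
    by (simp add: nv_sq)
  then have "(nv (stp C G u))^2 < (nv u)^2"
    using contract[OF assms(1,2), of u] by (simp add: nv_sq)
  then show ?thesis by (rule power_less_imp_less_base[OF _ nv_nonneg])
qed

lemma nonexp:
  fixes G :: "('v \<times> 'v) set"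
  assumes "G \<subseteq> E" "sym G"
  shows "nv (stp C G u - stp C G v) \<le> nv (u - v)"
  using le1[OF assms, of "u - v"] by (simp add: stp_diff)

end



lemma qq_zero_mat:
  assumes "qq C y i j = 0"
  shows "mat_apply (C j i) (y i) = mat_apply (C j i) (y j)"
proof -
  let ?z = "y i - y j"
  have "?z \<bullet> gram_apply (C i j) ?z + ?z \<bullet> gram_apply (C j i) ?z = 0"
    using assms by (simp add: qq_def Pm_def inner_add_right)
  then have "?z \<bullet> gram_apply (C j i) ?z = 0"
    using inner_gram_nonneg[of ?z "C i j"] inner_gram_nonneg[of ?z "C j i"] by linarith
  then have k0: "\<And>k. k < length (C j i) \<Longrightarrow> C j i ! k \<bullet> ?z = 0"
    by (rule inner_gram_zero)
  show ?thesis unfolding mat_apply_def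
  proof (rule map_cong[OF refl])
    fix r assume "r \<in> set (C j i)"
    then obtain k where "k < length (C j i)" "r = C j i ! k" by (auto simp: in_set_conv_nth)
    then have "r \<bullet> ?z = 0" using k0 by simp
    then show "r \<bullet> y i = r \<bullet> y j" by (simp add: inner_diff_right)
  qed
qed

theorem theorem6:
  fixes E :: "('v::finite \<times> 'v) set"
    and C :: "'v \<Rightarrow> 'v \<Rightarrow> (real^'n) list"
    and N :: "nat \<Rightarrow> ('v \<times> 'v) set"
    and x :: "nat \<Rightarrow> 'v \<Rightarrow> real^'n"
  assumes symE: "sym E"
    and noloop: "\<forall>i. (i, i) \<notin> E"
    and sc: "strongly_connected E"
    and orth: "\<forall>i j. (i, j) \<in> E \<longrightarrow> orthonormal_rows (C i j)"
    and wc: "well_configured E C"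
    and sub: "\<forall>t. N t \<subseteq> E"
    and symN: "\<forall>t. sym (N t)"
    and inf: "\<forall>a\<in>E. infinite {t. a \<in> N t}"
    and upd: "\<forall>t i. x (Suc t) i = x t i - (1/2) *\<^sub>R
                 (\<Sum>j\<in>nbrs (N t) i. weight (N t) i j *\<^sub>R
                    (gram_apply (C i j) (x t i - x t j) + gram_apply (C j i) (x t i - x t j)))"
  shows "\<exists>xs :: real^'n. \<forall>i. (\<lambda>t. x t i) \<longlonglongrightarrow> xs"
proof -
  interpret setting E C using symE orth by unfold_locales
  have xs: "\<And>t. x (Suc t) = stp C (N t) (x t)"
    using upd by (simp add: fun_eq_iff stp_def gv_def Pm_def)
  have subt: "\<And>t. N t \<subseteq> E" and symt: "\<And>t. sym (N t)" using sub symN by auto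
  define a where "a t = nv (x t)" for t
  have adec: "decseq a"
    unfolding decseq_Suc_iff a_def xs using le1[OF subt symt] by blast
  obtain r where ar: "a \<longlonglongrightarrow> r" and rle: "\<And>t. r \<le> a t"
    using decseq_convergent[OF adec, of 0] nv_nonneg unfolding a_def by blast
  define V where "V t = (vec_lambda (x t) :: (real^'n)^'v)" for t
  have "bounded (range V)"
    unfolding bounded_iff
  proof (intro exI ballI)
    fix v assume "v \<in> range V"
    then obtain t where "v = V t" by auto
    then show "norm v \<le> a 0"
      using decseqD[OF adec, of 0 t] by (simp add: V_def a_def nv_def)
  qed
  then obtain l and \<sigma> :: "nat \<Rightarrow> nat" where smono: "strict_mono \<sigma>" and lim: "(V \<circ> \<sigma>) \<longlonglongrightarrow> l"
    using bounded_imp_convergent_subsequence by blast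
  define y where "y = vec_nth l"
  have ly: "vec_lambda y = l" unfolding y_def by simp
  have dist_eq: "\<And>t. dist (V t) l = nv (x t - y)"
    by (simp add: V_def nv_def vl_diff ly dist_norm)
  have "(\<lambda>k. norm (V (\<sigma> k))) \<longlonglongrightarrow> norm l"
    using lim by (intro tendsto_norm) (simp add: o_def)
  moreover have "(\<lambda>k. norm (V (\<sigma> k))) \<longlonglongrightarrow> r"
    using LIMSEQ_subseq_LIMSEQ[OF ar smono] by (simp add: o_def V_def a_def nv_def)
  ultimately have ry: "nv y = r"
    using LIMSEQ_unique by (fastforce simp: nv_def ly)
  define F where "F = {G. G \<subseteq> E \<and> sym G \<and> stp C G y \<noteq> y}"
  have finF: "finite F" unfolding F_def by (rule finite_subset[of _ "Pow E"]) auto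
  have posF: "\<And>G. G \<in> F \<Longrightarrow> 0 < r - nv (stp C G y)"
    using lt1 ry unfolding F_def by fastforce
  define \<epsilon> where "\<epsilon> = Min (insert 1 ((\<lambda>G. r - nv (stp C G y)) ` F))"
  have eps0: "0 < \<epsilon>"
    unfolding \<epsilon>_def using finF posF by (subst Min_gr_iff) auto
  have epsle: "\<And>G. G \<in> F \<Longrightarrow> \<epsilon> \<le> r - nv (stp C G y)"
    unfolding \<epsilon>_def using finF by (intro Min_le) auto
  have keystep: "stp C (N s) y = y" if close: "nv (x s - y) < \<epsilon>" for s
  proof (rule ccontr)
    assume ne: "stp C (N s) y \<noteq> y"
    then have inF: "N s \<in> F" unfolding F_def using subt symt by auto
    have "nv (x (Suc s)) \<le> nv (stp C (N s) y) + nv (stp C (N s) (x s) - stp C (N s) y)"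
      unfolding xs by (rule nv_tri)
    also have "\<dots> \<le> nv (stp C (N s) y) + nv (x s - y)"
      using nonexp[OF subt symt] by simp
    also have "\<dots> < nv (stp C (N s) y) + \<epsilon>" using close by simp
    also have "\<dots> \<le> r" using epsle[OF inF] by simp
    finally show False using rle[of "Suc s"] unfolding a_def by simp
  qed
  have monostep: "nv (x (Suc s) - y) \<le> nv (x s - y)" if close: "nv (x s - y) < \<epsilon>" for s
  proof -
    have "nv (x (Suc s) - y) = nv (stp C (N s) (x s) - stp C (N s) y)"
      using keystep[OF close] xs by simp
    also have "\<dots> \<le> nv (x s - y)" by (rule nonexp[OF subt symt])
    finally show ?thesis .
  qed
  have "\<forall>\<^sub>F k in sequentially. dist ((V \<circ> \<sigma>) k) l < \<epsilon>"
    using lim eps0 by (rule tendstoD)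
  then obtain k where k: "nv (x (\<sigma> k) - y) < \<epsilon>"
    unfolding eventually_sequentially by (auto simp: dist_eq)
  define t0 where "t0 = \<sigma> k"
  have closeall: "nv (x s - y) < \<epsilon>" if "t0 \<le> s" for s
    using that
  proof (induct s rule: dec_induct)
    case base show ?case using k by (simp only: t0_def)
  next
    case (step s) then show ?case using monostep by (meson le_less_trans)
  qed
  have mono2: "nv (x t - y) \<le> nv (x t' - y)" if "t0 \<le> t'" "t' \<le> t" for t t'
    using that(2)
  proof (induct t rule: dec_induct)
    case base then show ?case by simp
  next
    case (step s)
    then have "t0 \<le> s" using that(1) by simp
    then show ?case using monostep[OF closeall] step(3) by (meson order_trans)
  qed
  have Vlim: "V \<longlonglongrightarrow> l"
  proof (rule LIMSEQ_I)
    fix e :: real assume e: "0 < e"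
    have "\<forall>\<^sub>F k in sequentially. dist ((V \<circ> \<sigma>) k) l < e"
      using lim e by (rule tendstoD)
    then obtain k0 where k0: "\<And>k'. k0 \<le> k' \<Longrightarrow> nv (x (\<sigma> k') - y) < e"
      unfolding eventually_sequentially by (auto simp: dist_eq)
    define k' where "k' = max k k0"
    have "t0 \<le> \<sigma> k'" unfolding t0_def k'_def using smono by (simp add: strict_mono_leD)
    show "\<exists>no. \<forall>n\<ge>no. norm (V n - l) < e"
    proof (intro exI allI impI)
      fix n assume "\<sigma> k' \<le> n"
      then have "nv (x n - y) \<le> nv (x (\<sigma> k') - y)"
        using mono2 \<open>t0 \<le> \<sigma> k'\<close> by blast
      also have "\<dots> < e" using k0 by (simp add: k'_def)
      finally show "norm (V n - l) < e" using dist_eq[of n] by (simp add: dist_norm)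
    qed
  qed
  have P: "\<forall>j i. (j, i) \<in> E \<longrightarrow> mat_apply (C j i) (y i) = mat_apply (C j i) (y j)"
    proof (intro allI impI)
      fix j i assume ji: "(j, i) \<in> E"
      then have "infinite {t. (j, i) \<in> N t}" using inf by blast
      then obtain t where t: "t0 \<le> t" "(j, i) \<in> N t"
        unfolding infinite_nat_iff_unbounded_le by blast
      have fx: "stp C (N t) y = y" using keystep closeall[OF t(1)] by blast
      have "j \<in> nbrs (N t) i" using t(2) by (simp add: nbrs_def)
      then have "qq C y i j = 0" by (rule fixed_qq[OF symt fx])
      then show "mat_apply (C j i) (y i) = mat_apply (C j i) (y j)" by (rule qq_zero_mat)
    qed
  have cons: "\<forall>i j. y i = y j"
    using wc P unfolding well_configured_def by blast
  fix i0 :: 'v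
  show ?thesis
  proof (intro exI allI)
    fix i
    have "(\<lambda>t. V t $ i) \<longlonglongrightarrow> l $ i" using Vlim by (rule tendsto_vec_nth)
    then have "(\<lambda>t. x t i) \<longlonglongrightarrow> y i" by (simp add: V_def y_def)
    moreover have "y i = y i0" using cons by blast
    ultimately show "(\<lambda>t. x t i) \<longlonglongrightarrow> y i0" by simp
  qed
qed

end
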